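(* The cellular automaton $F$ on the free group $G$ with generators $a,b$ and alphabet $A=\{0,1,\iota,\beta\}$ described in the context is not sensitive to initial conditions.
   Context: $G$ is the free group on $\{a,b\}$ with generating set $E=\{a,a^{-1},b,b^{-1}\}$, word norm $\|g\|$, and Cantor metric $d(x,y)=2^{-k}$, $k=\min\{\|g\|:x_g\neq y_g\}$, on $A^G$, with closed balls $B$. In a configuration $c\in A^G$, a position $g$ is free if $c_g\in\{0,1\}$ and $|\{g'\in gE: c_{g'}\in\{0,1\}\}|\geq 2$. A position $g$ is blocked in $c$ if either ($c_g=\iota$ and $c_{g'}\in\{\iota,\beta\}$ for all $g'\in gE$), or ($c_g=\beta$ and exactly one $g'\in gE$ has $c_{g'}=\iota$ and all other elements of $gE$ are free in $c$). The map $F:A^G\to A^G$ is defined by: $F(c)_g=c_g+\sum_{g'\in gE,\,c_{g'}\in\{0,1\}}c_{g'}\bmod 2$ if $c_g\in\{0,1\}$; $F(c)_g=c_g$ if $g$ is blocked in $c$; $F(c)_g=0$ otherwise. (It is a cellular automaton of radius 2.) $F$ is sensitive to initial conditions if $\exists\epsilon>0\,\forall x\,\forall\delta>0\,\exists t\in\mathbb{N}\,\exists y\in B(x,\delta)$ with $F^t(y)\notin B(F^t(x),\epsilon)$. *)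

theory Defs
  imports Main "HOL.Real"
begin

datatype letter = La | LaInv | Lb | LbInv

fun linv :: "letter \<Rightarrow> letter" where
  "linv La = LaInv" | "linv LaInv = La" | "linv Lb = LbInv" | "linv LbInv = Lb"

definition reduced :: "letter list \<Rightarrow> bool" where
  "reduced w \<longleftrightarrow> (\<forall>i. Suc i < length w \<longrightarrow> w ! Suc i \<noteq> linv (w ! i))"

typedef fg = "{w. reduced w}"
  by (rule exI[of _ "[]"]) (simp add: reduced_def)

definition gmul :: "fg \<Rightarrow> letter \<Rightarrow> fg" where
  "gmul g e = Abs_fg (if Rep_fg g \<noteq> [] \<and> last (Rep_fg g) = linv e
                      then butlast (Rep_fg g) else Rep_fg g @ [e])"

definition wnorm :: "fg \<Rightarrow> nat" where
  "wnorm g = length (Rep_fg g)"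

definition nbrs :: "fg \<Rightarrow> fg set" where
  "nbrs g = gmul g ` {La, LaInv, Lb, LbInv}"

datatype sym = S0 | S1 | Iota | Beta

type_synonym config = "fg \<Rightarrow> sym"

definition isbit :: "sym \<Rightarrow> bool" where
  "isbit s \<longleftrightarrow> s = S0 \<or> s = S1"

fun bval :: "sym \<Rightarrow> nat" where
  "bval S1 = 1" | "bval _ = 0"

definition cdist :: "config \<Rightarrow> config \<Rightarrow> real" where
  "cdist x y = (if x = y then 0
     else (1/2) ^ (LEAST k. \<exists>g. wnorm g = k \<and> x g \<noteq> y g))"

definition cball :: "config \<Rightarrow> real \<Rightarrow> config set" where
  "cball x r = {y. cdist x y \<le> r}"

definition free_pos :: "config \<Rightarrow> fg \<Rightarrow> bool" where
  "free_pos c g \<longleftrightarrow> isbit (c g) \<and> card {g' \<in> nbrs g. isbit (c g')} \<ge> 2"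

definition blocked :: "config \<Rightarrow> fg \<Rightarrow> bool" where
  "blocked c g \<longleftrightarrow>
     (c g = Iota \<and> (\<forall>g'\<in>nbrs g. c g' = Iota \<or> c g' = Beta)) \<or>
     (c g = Beta \<and> (\<exists>!g'. g' \<in> nbrs g \<and> c g' = Iota)
        \<and> (\<forall>g'\<in>nbrs g. c g' \<noteq> Iota \<longrightarrow> free_pos c g'))"

definition CA :: "config \<Rightarrow> config" where
  "CA c g =
     (if isbit (c g) then
        (if odd (bval (c g) + (\<Sum>g'\<in>{g' \<in> nbrs g. isbit (c g')}. bval (c g')))
         then S1 else S0)
      else if blocked c g then c g
      else S0)"

definition sensitive :: "(config \<Rightarrow> config) \<Rightarrow> bool" where
  "sensitive F \<longleftrightarrow> (\<exists>\<epsilon>>0. \<forall>x. \<forall>\<delta>>0. \<exists>t::nat. \<exists>y \<in> cball x \<delta>.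
      (F ^^ t) y \<notin> cball ((F ^^ t) x) \<epsilon>)"

end

theory Submission
  imports Defs
begin

lemma linv_linv[simp]: "linv (linv e) = e" by (cases e) auto

lemma reduced_butlast: "reduced w \<Longrightarrow> reduced (butlast w)"
  unfolding reduced_def by (auto simp: nth_butlast)

lemma reduced_snoc:
  assumes "reduced w" "w \<noteq> [] \<Longrightarrow> last w \<noteq> linv e"
  shows "reduced (w @ [e])"
  unfolding reduced_def
proof (intro allI impI)
  fix i assume i: "Suc i < length (w @ [e])"
  show "(w @ [e]) ! Suc i \<noteq> linv ((w @ [e]) ! i)"
  proof (cases "Suc i < length w")
    case True
    then show ?thesis using assms(1) unfolding reduced_def by (auto simp: nth_append)
  next
    case False
    then have si: "Suc i = length w" using i by simp
    then have "w \<noteq> []" by auto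
    have "w ! i = last w" using si \<open>w \<noteq> []\<close> by (metis diff_Suc_1 last_conv_nth)
    moreover have "e \<noteq> linv (last w)" using assms(2)[OF \<open>w \<noteq> []\<close>] by auto
    ultimately show ?thesis using si by (auto simp: nth_append)
  qed
qed

lemma Rep_gmul:
  "Rep_fg (gmul g e) = (if Rep_fg g \<noteq> [] \<and> last (Rep_fg g) = linv e
                      then butlast (Rep_fg g) else Rep_fg g @ [e])"
proof -
  have r: "reduced (Rep_fg g)" using Rep_fg by simp
  have "reduced (if Rep_fg g \<noteq> [] \<and> last (Rep_fg g) = linv e
                      then butlast (Rep_fg g) else Rep_fg g @ [e])"
    using reduced_butlast[OF r] reduced_snoc[OF r, of e] by auto
  then show ?thesis unfolding gmul_def by (simp add: Abs_fg_inverse)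
qed

lemma nbr_norm: "g' \<in> nbrs g \<Longrightarrow> wnorm g' = wnorm g + 1 \<or> wnorm g' + 1 = wnorm g"
  unfolding nbrs_def wnorm_def by (auto simp: Rep_gmul)

lemma nbr_down_unique:
  assumes "g' \<in> nbrs g" "wnorm g' + 1 = wnorm g"
  shows "g' = Abs_fg (butlast (Rep_fg g))"
proof -
  obtain e where e: "g' = gmul g e" using assms(1) unfolding nbrs_def by auto
  have "Rep_fg g \<noteq> [] \<and> last (Rep_fg g) = linv e"
    using assms(2) unfolding e wnorm_def by (auto simp: Rep_gmul split: if_splits)
  then show ?thesis unfolding e gmul_def by simp
qed

lemma parent_exists:
  assumes "wnorm g \<ge> 1"
  shows "\<exists>g'\<in>nbrs g. wnorm g' + 1 = wnorm g"
proof -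
  have ne: "Rep_fg g \<noteq> []" using assms unfolding wnorm_def by auto
  let ?e = "linv (last (Rep_fg g))"
  have "?e \<in> {La, LaInv, Lb, LbInv}" by (cases ?e) auto
  then have "gmul g ?e \<in> nbrs g" unfolding nbrs_def by auto
  moreover have "wnorm (gmul g ?e) + 1 = wnorm g"
    using ne unfolding wnorm_def by (simp add: Rep_gmul)
  ultimately show ?thesis by blast
qed

lemma finite_nbrs: "finite (nbrs g)" unfolding nbrs_def by simp

lemma two_children:
  "\<exists>g1 g2. g1 \<in> nbrs g \<and> g2 \<in> nbrs g \<and> g1 \<noteq> g2 \<and>
     wnorm g1 = wnorm g + 1 \<and> wnorm g2 = wnorm g + 1"
proof -
  obtain e1 e2 where ee: "e1 \<noteq> e2" "e1 \<in> {La, LaInv, Lb, LbInv}" "e2 \<in> {La, LaInv, Lb, LbInv}"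
    and n1: "\<not> (Rep_fg g \<noteq> [] \<and> last (Rep_fg g) = linv e1)"
    and n2: "\<not> (Rep_fg g \<noteq> [] \<and> last (Rep_fg g) = linv e2)"
  proof (cases "Rep_fg g = [] \<or> last (Rep_fg g) \<in> {La, LaInv}")
    case True
    then show ?thesis using that[of Lb LbInv] by auto
  next
    case False
    then show ?thesis using that[of La LaInv] by auto
  qed
  have r1: "Rep_fg (gmul g e1) = Rep_fg g @ [e1]" using n1 by (simp only: Rep_gmul if_False)
  have r2: "Rep_fg (gmul g e2) = Rep_fg g @ [e2]" using n2 by (simp only: Rep_gmul if_False)
  have "gmul g e1 \<noteq> gmul g e2" using r1 r2 ee(1) by auto
  moreover have "gmul g e1 \<in> nbrs g" "gmul g e2 \<in> nbrs g" using ee unfolding nbrs_def by auto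
  moreover have "wnorm (gmul g e1) = wnorm g + 1" "wnorm (gmul g e2) = wnorm g + 1"
    unfolding wnorm_def using r1 r2 by auto
  ultimately show ?thesis by blast
qed

definition P :: "nat \<Rightarrow> config \<Rightarrow> bool" where
  "P k c \<longleftrightarrow> (\<forall>g. (wnorm g < k \<longrightarrow> c g = Iota) \<and> (wnorm g = k \<longrightarrow> c g = Beta)
      \<and> (wnorm g = k + 1 \<longrightarrow> isbit (c g)) \<and> (wnorm g = k + 2 \<longrightarrow> isbit (c g)))"

lemma free_lemma:
  assumes "P k c" "wnorm h = k + 1"
  shows "free_pos c h"
proof -
  obtain g1 g2 where g: "g1 \<in> nbrs h" "g2 \<in> nbrs h" "g1 \<noteq> g2"
    "wnorm g1 = wnorm h + 1" "wnorm g2 = wnorm h + 1" using two_children by blast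
  have "{g1, g2} \<subseteq> {g' \<in> nbrs h. isbit (c g')}" using g assms unfolding P_def by auto
  moreover have "finite {g' \<in> nbrs h. isbit (c g')}" using finite_nbrs by simp
  ultimately have "card {g1, g2} \<le> card {g' \<in> nbrs h. isbit (c g')}" by (rule card_mono[rotated])
  then have "card {g' \<in> nbrs h. isbit (c g')} \<ge> 2" using g(3) by simp
  then show ?thesis unfolding free_pos_def using assms unfolding P_def by auto
qed

lemma blocked_lemma:
  assumes "P k c" "k \<ge> 1" "wnorm g \<le> k"
  shows "blocked c g"
proof (cases "wnorm g < k")
  case True
  have "\<forall>g'\<in>nbrs g. c g' = Iota \<or> c g' = Beta"
  proof
    fix g' assume "g' \<in> nbrs g"
    then have "wnorm g' < k \<or> wnorm g' = k" using nbr_norm True by fastforce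
    then show "c g' = Iota \<or> c g' = Beta" using assms(1) unfolding P_def by auto
  qed
  moreover have "c g = Iota" using True assms(1) unfolding P_def by auto
  ultimately show ?thesis unfolding blocked_def by auto
next
  case False
  then have gk: "wnorm g = k" using assms(3) by simp
  have cg: "c g = Beta" using gk assms(1) unfolding P_def by auto
  obtain p where p: "p \<in> nbrs g" "wnorm p + 1 = wnorm g" using parent_exists assms(2) gk by force
  have cp: "c p = Iota" using p gk assms(1) unfolding P_def by auto
  have iota_down: "wnorm g' + 1 = wnorm g" if "g' \<in> nbrs g" "c g' = Iota" for g'
  proof -
    have "wnorm g' = k + 1 \<or> wnorm g' + 1 = k" using nbr_norm[OF that(1)] gk by simp
    moreover have "\<not> isbit Iota" by (simp add: isbit_def)
    ultimately show ?thesis using that(2) assms(1) gk unfolding P_def by force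
  qed
  have "\<exists>!g'. g' \<in> nbrs g \<and> c g' = Iota"
  proof
    show "p \<in> nbrs g \<and> c p = Iota" using p cp by simp
  next
    fix g' assume "g' \<in> nbrs g \<and> c g' = Iota"
    then show "g' = p" using iota_down nbr_down_unique p by metis
  qed
  moreover have "\<forall>g'\<in>nbrs g. c g' \<noteq> Iota \<longrightarrow> free_pos c g'"
  proof (intro ballI impI)
    fix g' assume g': "g' \<in> nbrs g" "c g' \<noteq> Iota"
    have "wnorm g' + 1 \<noteq> k"
    proof
      assume "wnorm g' + 1 = k"
      then have "wnorm g' < k" by simp
      then show False using g' assms(1) unfolding P_def by auto
    qed
    then have "wnorm g' = k + 1" using nbr_norm[OF g'(1)] gk by auto
    then show "free_pos c g'" using free_lemma assms(1) by blast
  qed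
  ultimately show ?thesis using cg unfolding blocked_def by auto
qed

lemma step_lemma:
  assumes "P k c" "k \<ge> 1"
  shows "P k (CA c) \<and> (\<forall>g. wnorm g \<le> k \<longrightarrow> CA c g = c g)"
proof -
  have fix_: "CA c g = c g" if "wnorm g \<le> k" for g
  proof -
    have "c g = Iota \<or> c g = Beta" using that assms(1) unfolding P_def
      by (cases "wnorm g < k") auto
    then have "\<not> isbit (c g)" unfolding isbit_def by auto
    then show ?thesis using blocked_lemma[OF assms that] unfolding CA_def by simp
  qed
  have bit: "isbit (CA c g)" if "isbit (c g)" for g
    using that unfolding CA_def by (simp add: isbit_def)
  have "P k (CA c)" unfolding P_def
  proof (intro allI conjI impI)
    fix g
    show "wnorm g < k \<Longrightarrow> CA c g = Iota" using fix_ assms(1) unfolding P_def by auto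
    show "wnorm g = k \<Longrightarrow> CA c g = Beta" using fix_ assms(1) unfolding P_def by auto
    show "wnorm g = k + 1 \<Longrightarrow> isbit (CA c g)" using bit assms(1) unfolding P_def by auto
    show "wnorm g = k + 2 \<Longrightarrow> isbit (CA c g)" using bit assms(1) unfolding P_def by auto
  qed
  then show ?thesis using fix_ by blast
qed

lemma iter_lemma:
  assumes "P k c" "k \<ge> 1"
  shows "P k ((CA ^^ t) c) \<and> (\<forall>g. wnorm g \<le> k \<longrightarrow> (CA ^^ t) c g = c g)"
proof (induction t)
  case 0
  then show ?case using assms by simp
next
  case (Suc t)
  then show ?case using step_lemma[OF _ assms(2), of "(CA ^^ t) c"] by simp
qed

lemma cdist_le:
  assumes "\<forall>g. wnorm g \<le> m \<longrightarrow> x g = y g"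
  shows "cdist x y \<le> (1/2) ^ (m + 1)"
proof (cases "x = y")
  case True
  then show ?thesis by (simp add: cdist_def)
next
  case False
  then obtain g0 where "x g0 \<noteq> y g0" by auto
  then have ex: "\<exists>g. wnorm g = wnorm g0 \<and> x g \<noteq> y g" by auto
  let ?L = "LEAST k. \<exists>g. wnorm g = k \<and> x g \<noteq> y g"
  obtain g where g: "wnorm g = ?L" "x g \<noteq> y g" using LeastI_ex[of "\<lambda>k. \<exists>g. wnorm g = k \<and> x g \<noteq> y g"] ex by blast
  have "?L \<ge> m + 1"
  proof (rule ccontr)
    assume "\<not> ?L \<ge> m + 1"
    then have "wnorm g \<le> m" using g(1) by simp
    then show False using assms g(2) by auto
  qed
  then have "(1/2::real) ^ ?L \<le> (1/2) ^ (m + 1)" by (rule power_decreasing) auto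
  then show ?thesis using False by (simp add: cdist_def)
qed

lemma cdist_agree:
  assumes "cdist x y \<le> (1/2) ^ (m + 1)" "wnorm g \<le> m"
  shows "x g = y g"
proof (rule ccontr)
  assume ne: "x g \<noteq> y g"
  then have "x \<noteq> y" by auto
  let ?L = "LEAST k. \<exists>g. wnorm g = k \<and> x g \<noteq> y g"
  have "?L \<le> wnorm g" using ne by (intro Least_le) auto
  then have "?L \<le> m" using assms(2) by simp
  then have "(1/2::real) ^ m \<le> (1/2) ^ ?L" by (rule power_decreasing) auto
  moreover have "(1/2::real) ^ (m+1) < (1/2) ^ m" by simp
  ultimately have "(1/2::real) ^ (m+1) < (1/2) ^ ?L" by linarith
  moreover have "cdist x y = (1/2) ^ ?L" using \<open>x \<noteq> y\<close> by (simp add: cdist_def)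
  ultimately show False using assms(1) by linarith
qed

theorem lemma7:
  shows "\<not> sensitive CA"
proof
  assume "sensitive CA"
  then obtain \<epsilon> :: real where ep: "\<epsilon> > 0" and
    H: "\<forall>x. \<forall>\<delta>>0. \<exists>t::nat. \<exists>y \<in> cball x \<delta>. (CA ^^ t) y \<notin> cball ((CA ^^ t) x) \<epsilon>"
    unfolding sensitive_def by blast
  obtain n where n: "(1/2::real) ^ n < \<epsilon>" using real_arch_pow_inv[OF ep, of "1/2"] by auto
  define k where "k = n + 1"
  have k1: "k \<ge> 1" unfolding k_def by simp
  have ke: "(1/2::real) ^ (k + 1) \<le> \<epsilon>"
  proof -
    have "(1/2::real) ^ (k + 1) \<le> (1/2) ^ n" unfolding k_def by (rule power_decreasing) auto
    then show ?thesis using n by simp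
  qed
  define x :: config where "x = (\<lambda>g. if wnorm g < k then Iota else if wnorm g = k then Beta else S0)"
  have Px: "P k x" unfolding P_def x_def isbit_def by auto
  obtain t y where y: "y \<in> cball x ((1/2) ^ (k + 3))"
    and bad: "(CA ^^ t) y \<notin> cball ((CA ^^ t) x) \<epsilon>"
  proof -
    have "(1/2::real) ^ (k + 3) > 0" by simp
    then show ?thesis using H that by blast
  qed
  have agree: "y g = x g" if "wnorm g \<le> k + 2" for g
  proof -
    have e: "k + 2 + 1 = k + 3" by simp
    have "cdist x y \<le> (1/2) ^ (k + 3)" using y unfolding cball_def by simp
    then have "cdist x y \<le> (1/2) ^ (k + 2 + 1)" by (simp only: e)
    then show ?thesis using cdist_agree[of x y "k+2" g] that by simp
  qed
  have Py: "P k y" using Px agree unfolding P_def by auto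
  have "\<forall>g. wnorm g \<le> k \<longrightarrow> (CA ^^ t) x g = (CA ^^ t) y g"
    using iter_lemma[OF Px k1, of t] iter_lemma[OF Py k1, of t] agree by auto
  then have "cdist ((CA ^^ t) x) ((CA ^^ t) y) \<le> \<epsilon>" using cdist_le ke by (meson order.trans)
  then show False using bad unfolding cball_def by simp
qed

end
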